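(* In the setting below, suppose the tight disturbance bound assumption and the persistent excitation assumption hold, and let $\Theta_t=\Theta_0\cap\bigcap_{j=1}^t\Delta_j$ (the minimal parameter set). Then for every $\epsilon>0$, every $\theta\in\Theta_0$ with $\|\theta-\theta^\ast\|\ge\epsilon$ and every $t\in\mathbb{N}_{\ge0}$, $$\Pr\{\theta\in\Theta_t\}\ \le\ \Bigl[1-p_w\bigl(\epsilon\sqrt{\beta/N_u}\bigr)\Bigr]^{\lfloor t/N_u\rfloor}.$$
   Context: Setting: $\theta^\ast\in\mathbb{R}^p$ is a fixed (unknown) parameter vector. $\Theta_0\subset\mathbb{R}^p$ is a compact convex polytope containing $\theta^\ast$. $\mathcal{W}=\{w\in\mathbb{R}^{n_x}:\Pi_w w\le\pi_w\}$ is a compact convex polytope with $\pi_w>0$. The disturbances $w_0,w_1,\dots$ are independent random vectors with $w_t\in\mathcal{W}$ for all $t$. $D_0,D_1,\dots\in\mathbb{R}^{n_x\times p}$ is a given (non-random) sequence of regressor matrices. For $t\ge1$ the (random) unfalsified parameter set is $\Delta_t=\{\theta\in\mathbb{R}^p: D_{t-1}(\theta^\ast-\theta)+w_{t-1}\in\mathcal{W}\}$. $\|\cdot\|$ is the Euclidean norm (induced 2-norm for matrices); $\partial\mathcal{W}$ is the boundary of $\mathcal{W}$. Tight disturbance bound assumption: there is a function $p_w:(0,\infty)\to(0,1]$ such that for all $w^0\in\partial\mathcal{W}$, all $\epsilon>0$ and all $t\ge0$, $\Pr\{\|w_t-w^0\|<\epsilon\}\ge p_w(\epsilon)$. Persistent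 excitation assumption: there exist $\tau>0$, $\beta>0$ and an integer $N_u\ge\lceil p/n_x\rceil$ such that for every $t\ge0$, $\|D_t\|\le\tau$ and $\sum_{j=t}^{t+N_u-1}D_j^\top D_j\succeq\beta I$. *)

theory Defs
  imports "HOL-Analysis.Analysis" "HOL-Probability.Probability"
begin

definition hpoly :: "real^'n^'m \<Rightarrow> real^'m \<Rightarrow> (real^'n) set" where
  "hpoly Pw pw = {w. \<forall>i. (Pw *v w) $ i \<le> pw $ i}"

definition loewner_ge :: "real^'p^'p \<Rightarrow> real^'p^'p \<Rightarrow> bool" where
  "loewner_ge A B \<longleftrightarrow> (\<forall>x. x \<bullet> ((A - B) *v x) \<ge> 0)"

definition unfalsified ::
  "(nat \<Rightarrow> real^'p^'n) \<Rightarrow> real^'p \<Rightarrow> (real^'n) set \<Rightarrow> (nat \<Rightarrow> 'w \<Rightarrow> real^'n)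
     \<Rightarrow> nat \<Rightarrow> 'w \<Rightarrow> (real^'p) set" where
  "unfalsified D \<theta>s W w t \<omega> = {\<theta>. D (t - 1) *v (\<theta>s - \<theta>) + w (t - 1) \<omega> \<in> W}"

definition min_param_set ::
  "(real^'p) set \<Rightarrow> (nat \<Rightarrow> real^'p^'n) \<Rightarrow> real^'p \<Rightarrow> (real^'n) set \<Rightarrow> (nat \<Rightarrow> 'w \<Rightarrow> real^'n)
     \<Rightarrow> nat \<Rightarrow> 'w \<Rightarrow> (real^'p) set" where
  "min_param_set \<Theta>0 D \<theta>s W w t \<omega> = \<Theta>0 \<inter> (\<Inter>j\<in>{1..t}. unfalsified D \<theta>s W w j \<omega>)"

end

theory Submission
  imports Defs
begin

lemma sum_mat_vec: "finite S \<Longrightarrow> (\<Sum>j\<in>S. A j) *v x = (\<Sum>j\<in>S. A j *v (x::real^'a))"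
  by (induction S rule: finite_induct) (auto simp: matrix_vector_mult_add_rdistrib)

lemma quad_form: fixes A :: "real^'p^'n"
  shows "x \<bullet> ((transpose A ** A) *v x) = norm (A *v x)^2"
proof -
  have "x \<bullet> ((transpose A ** A) *v x) = x \<bullet> ((A *v x) v* A)"
    by (simp add: matrix_vector_mul_assoc[symmetric] transpose_matrix_vector)
  also have "\<dots> = (A *v x) \<bullet> (A *v x)" by (subst inner_commute) (rule dot_lmul_matrix)
  finally show ?thesis by (simp add: power2_norm_eq_inner)
qed

lemma excite:
  assumes "loewner_ge (\<Sum>j\<in>S. transpose (D j) ** D j) (\<beta> *\<^sub>R mat 1)" "finite S"
  shows "(\<Sum>j\<in>S. norm (D j *v x)^2) \<ge> \<beta> * norm (x::real^'p)^2"
proof -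
  have "0 \<le> x \<bullet> ((\<Sum>j\<in>S. transpose (D j) ** D j) *v x - (\<beta> *\<^sub>R mat 1) *v x)"
    using assms(1) unfolding loewner_ge_def by (metis matrix_vector_mult_diff_rdistrib)
  also have "\<dots> = (\<Sum>j\<in>S. norm (D j *v x)^2) - \<beta> * norm x ^2"
  proof -
    have "x \<bullet> ((\<Sum>j\<in>S. transpose (D j) ** D j) *v x) = (\<Sum>j\<in>S. norm (D j *v x)^2)"
      using assms(2) by (simp only: sum_mat_vec inner_sum_right quad_form)
    moreover have "x \<bullet> ((\<beta> *\<^sub>R mat 1) *v x) = \<beta> * norm x ^2"
      by (simp add: scaleR_matrix_vector_assoc[symmetric] power2_norm_eq_inner)
    ultimately show ?thesis by (simp only: inner_diff_right)
  qed
  finally show ?thesis by simp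
qed

lemma support_point:
  fixes W :: "(real^'n) set" and v :: "real^'n"
  assumes "compact W" "W \<noteq> {}" "norm v \<ge> r" "r > 0"
  shows "\<exists>w0\<in>frontier W. \<forall>u. norm (u - w0) < r \<longrightarrow> v + u \<notin> W"
proof -
  obtain w0 where w0: "w0 \<in> W" "\<And>y. y \<in> W \<Longrightarrow> v \<bullet> y \<le> v \<bullet> w0"
  proof -
    have "continuous_on W (\<lambda>y. v \<bullet> y)" by (intro continuous_intros)
    then show ?thesis using continuous_attains_sup[OF assms(1,2), of "\<lambda>y. v \<bullet> y"] that by blast
  qed
  have nv: "norm v > 0" using assms by linarith
  have "w0 \<notin> interior W"
  proof
    assume "w0 \<in> interior W"
    then obtain e where e: "e > 0" "ball w0 e \<subseteq> W" by (auto simp: mem_interior)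
    define y where "y = w0 + (e / 2 / norm v) *\<^sub>R v"
    have "dist w0 y < e" using e nv by (simp add: y_def dist_norm)
    then have "y \<in> W" using e by auto
    moreover have "v \<bullet> y = v \<bullet> w0 + e / 2 * norm v"
      using nv by (simp add: y_def inner_add_right power2_norm_eq_inner[symmetric] power2_eq_square)
    moreover have "e / 2 * norm v > 0" using e nv by simp
    ultimately show False using w0(2)[of y] by linarith
  qed
  moreover have "w0 \<in> closure W" using w0(1) closure_subset by blast
  ultimately have fr: "w0 \<in> frontier W" by (simp add: frontier_def)
  have "v + u \<notin> W" if u: "norm (u - w0) < r" for u
  proof
    assume "v + u \<in> W"
    hence le: "v \<bullet> (v + u) \<le> v \<bullet> w0" by (rule w0(2))
    have cs: "- (v \<bullet> (u - w0)) \<le> norm v * norm (u - w0)"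
      using norm_cauchy_schwarz[of "-v" "u - w0"] by simp
    have "norm v * norm (u - w0) < norm v * r" using u nv by simp
    also have "\<dots> \<le> norm v * norm v" using assms nv by simp
    finally have "norm v * norm (u - w0) < v \<bullet> v" by (simp add: power2_norm_eq_inner[symmetric] power2_eq_square)
    with cs le show False by (simp add: inner_add_right inner_diff_right)
  qed
  with fr show ?thesis by blast
qed

theorem theorem2:
  fixes M :: "'w measure"
    and \<theta>s :: "real^'p"
    and \<Theta>0 :: "(real^'p) set"
    and Pw :: "real^'n^'m" and pw :: "real^'m"
    and w :: "nat \<Rightarrow> 'w \<Rightarrow> real^'n"
    and D :: "nat \<Rightarrow> real^'p^'n"
    and p_w :: "real \<Rightarrow> real"
    and \<tau> \<beta> :: real and Nu :: nat
    and \<epsilon> :: real and \<theta> :: "real^'p" and t :: nat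
  assumes M: "prob_space M"
    and Theta0: "polytope \<Theta>0" "\<theta>s \<in> \<Theta>0"
    and W_compact: "compact (hpoly Pw pw)"
    and pw_pos: "\<forall>i. pw $ i > 0"
    and w_rv: "\<And>t. w t \<in> borel_measurable M"
    and w_indep: "prob_space.indep_vars M (\<lambda>_. borel) w UNIV"
    and w_in_W: "\<And>t \<omega>. \<omega> \<in> space M \<Longrightarrow> w t \<omega> \<in> hpoly Pw pw"
    and tight_range: "\<And>e. e > 0 \<Longrightarrow> 0 < p_w e \<and> p_w e \<le> 1"
    and tight: "\<And>w0 e t. w0 \<in> frontier (hpoly Pw pw) \<Longrightarrow> e > 0 \<Longrightarrow>
                  measure M {\<omega> \<in> space M. norm (w t \<omega> - w0) < e} \<ge> p_w e"
    and tau_pos: "\<tau> > 0" and beta_pos: "\<beta> > 0"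
    and Nu_ge: "real Nu \<ge> real_of_int \<lceil>real CARD('p) / real CARD('n)\<rceil>"
    and PE_bound: "\<And>t. onorm (\<lambda>x. D t *v x) \<le> \<tau>"
    and PE_excite: "\<And>t. loewner_ge (\<Sum>j\<in>{t..<t+Nu}. transpose (D j) ** D j) (\<beta> *\<^sub>R mat 1)"
    and eps_pos: "\<epsilon> > 0"
    and theta_in: "\<theta> \<in> \<Theta>0"
    and theta_far: "norm (\<theta> - \<theta>s) \<ge> \<epsilon>"
  shows "measure M {\<omega> \<in> space M. \<theta> \<in> min_param_set \<Theta>0 D \<theta>s (hpoly Pw pw) w t \<omega>}
           \<le> (1 - p_w (\<epsilon> * sqrt (\<beta> / real Nu))) ^ (t div Nu)"
proof -
  interpret P: prob_space M by (rule M)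
  define W where "W = hpoly Pw pw"
  have Wc: "compact W" using W_compact by (simp add: W_def)
  have W0: "0 \<in> W" using pw_pos by (simp add: W_def hpoly_def less_imp_le)
  hence Wne: "W \<noteq> {}" by blast
  have Wcl: "closed W" using Wc compact_imp_closed by blast
  have "real CARD('p) / real CARD('n) > 0" by simp
  hence "\<lceil>real CARD('p) / real CARD('n)\<rceil> > 0" by simp
  hence Nu_pos: "Nu > 0" using Nu_ge by linarith
  define r where "r = \<epsilon> * sqrt (\<beta> / real Nu)"
  have r_pos: "r > 0" using eps_pos beta_pos Nu_pos by (simp add: r_def)
  have r2: "r^2 = \<epsilon>^2 * \<beta> / real Nu"
    using beta_pos Nu_pos by (simp add: r_def power_mult_distrib)
  define \<delta> where "\<delta> = \<theta>s - \<theta>"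
  have nd: "norm \<delta> \<ge> \<epsilon>" using theta_far by (simp add: \<delta>_def norm_minus_commute)
  have blk: "\<exists>j. j \<in> {k*Nu..<k*Nu+Nu} \<and> norm (D j *v \<delta>) \<ge> r" for k
  proof (rule ccontr)
    assume "\<not> ?thesis"
    hence lt: "\<And>j. j \<in> {k*Nu..<k*Nu+Nu} \<Longrightarrow> norm (D j *v \<delta>)^2 < r^2"
      using r_pos by (meson not_le norm_ge_zero power_strict_mono zero_less_numeral)
    have ne: "{k*Nu..<k*Nu+Nu} \<noteq> {}" using Nu_pos by simp
    have "(\<Sum>j\<in>{k*Nu..<k*Nu+Nu}. norm (D j *v \<delta>)^2) < (\<Sum>j\<in>{k*Nu..<k*Nu+Nu}. r^2)"
      by (rule sum_strict_mono[OF _ ne lt]) auto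
    also have "\<dots> = real Nu * r^2" by simp
    also have "\<dots> = \<beta> * \<epsilon>^2" using r2 Nu_pos by simp
    also have "\<dots> \<le> \<beta> * norm \<delta>^2"
      using nd eps_pos beta_pos by (simp add: power_mono)
    finally show False using excite[OF PE_excite[of "k*Nu"], of \<delta>] by simp
  qed
  then obtain jf where jf: "\<And>k. jf k \<in> {k*Nu..<k*Nu+Nu}" "\<And>k. norm (D (jf k) *v \<delta>) \<ge> r"
    by metis
  have jf_div: "jf k div Nu = k" for k
    using jf(1)[of k] by (intro div_nat_eqI) (auto simp: algebra_simps)
  have inj: "inj jf" by (metis injI jf_div)
  have "\<exists>w0\<in>frontier W. \<forall>u. norm (u - w0) < r \<longrightarrow> D (jf k) *v \<delta> + u \<notin> W" for k
    by (rule support_point[OF Wc Wne jf(2) r_pos])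
  then obtain w0 where w0: "\<And>k. w0 k \<in> frontier W"
    "\<And>k u. norm (u - w0 k) < r \<Longrightarrow> D (jf k) *v \<delta> + u \<notin> W" by metis
  define T where "T = t div Nu"
  define B where "B j = {u. D j *v \<delta> + u \<in> W}" for j
  define A where "A j = w j -` B j \<inter> space M" for j
  have Bb: "B j \<in> sets borel" for j
  proof -
    have "closed ((\<lambda>u. D j *v \<delta> + u) -` W)"
      by (rule continuous_closed_vimage[OF Wcl]) (intro continuous_intros)
    thus ?thesis by (simp add: B_def vimage_def)
  qed
  have Am: "A j \<in> sets M" for j
    unfolding A_def using w_rv[of j] Bb by (simp add: measurable_sets)
  have Ab: "P.prob (A (jf k)) \<le> 1 - p_w r" for k
  proof -
    define C where "C = {\<omega> \<in> space M. norm (w (jf k) \<omega> - w0 k) < r}"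
    have Cm: "C \<in> sets M" unfolding C_def using w_rv[of "jf k"] by measurable
    have disj: "A (jf k) \<inter> C = {}"
      using w0(2)[of "w (jf k) _" k] by (auto simp: A_def B_def C_def)
    have "P.prob (A (jf k)) + P.prob C = P.prob (A (jf k) \<union> C)"
      using P.finite_measure_Union[OF Am Cm disj] by simp
    also have "\<dots> \<le> 1" by (rule P.prob_le_1)
    finally have "P.prob (A (jf k)) + P.prob C \<le> 1" .
    moreover have "P.prob C \<ge> p_w r"
      unfolding C_def using tight[OF _ r_pos] w0(1)[of k] by (simp add: W_def)
    ultimately show ?thesis by linarith
  qed
  have pr: "0 \<le> 1 - p_w r" using tight_range[OF r_pos] by simp
  show ?thesis
  proof (cases "T = 0")
    case True
    thus ?thesis using P.prob_le_1 by (simp add: T_def[symmetric])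
  next
    case False
    define J where "J = jf ` {..<T}"
    have Jfin: "finite J" and Jne: "J \<noteq> {}" using False by (auto simp: J_def)
    have sub: "{\<omega> \<in> space M. \<theta> \<in> min_param_set \<Theta>0 D \<theta>s (hpoly Pw pw) w t \<omega>} \<subseteq> \<Inter> (A ` J)"
    proof
      fix \<omega> assume om: "\<omega> \<in> {\<omega> \<in> space M. \<theta> \<in> min_param_set \<Theta>0 D \<theta>s (hpoly Pw pw) w t \<omega>}"
      show "\<omega> \<in> \<Inter> (A ` J)"
      proof
        fix j assume "j \<in> J"
        then obtain k where k: "k < T" "j = jf k" by (auto simp: J_def)
        have "jf k < Nu * Suc k" using jf(1)[of k] by (simp add: algebra_simps)
        also have "Nu * Suc k \<le> Nu * T" using k by (intro mult_le_mono2) simp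
        also have "Nu * T \<le> t" unfolding T_def by simp
        finally have "Suc (jf k) \<in> {1..t}" by simp
        hence "\<theta> \<in> unfalsified D \<theta>s W w (Suc (jf k)) \<omega>"
          using om by (auto simp: min_param_set_def W_def)
        thus "\<omega> \<in> A j" using om by (simp add: k A_def B_def unfalsified_def \<delta>_def)
      qed
    qed
    have "P.prob {\<omega> \<in> space M. \<theta> \<in> min_param_set \<Theta>0 D \<theta>s (hpoly Pw pw) w t \<omega>} \<le> P.prob (\<Inter> (A ` J))"
      by (rule P.finite_measure_mono[OF sub]) (use Jfin Jne Am in auto)
    also have "\<dots> = (\<Prod>j\<in>J. P.prob (A j))"
    proof (rule P.indep_setsD[of "\<lambda>i. sigma_sets (space M) {w i -` X \<inter> space M |X. X \<in> sets borel}" UNIV])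
      show "P.indep_sets (\<lambda>i. sigma_sets (space M) {w i -` X \<inter> space M |X. X \<in> sets borel}) UNIV"
        using w_indep by (simp add: P.indep_vars_def)
      show "\<forall>j\<in>J. A j \<in> sigma_sets (space M) {w j -` X \<inter> space M |X. X \<in> sets borel}"
        using Bb by (auto simp: A_def intro!: sigma_sets.Basic)
    qed (use Jfin Jne in auto)
    also have "\<dots> = (\<Prod>k\<in>{..<T}. P.prob (A (jf k)))"
      unfolding J_def using prod.reindex[OF inj_on_subset[OF inj], of "{..<T}" "\<lambda>j. P.prob (A j)"] by (simp add: comp_def)
    also have "\<dots> \<le> (\<Prod>k\<in>{..<T}. 1 - p_w r)"
      by (rule prod_mono) (use Ab in auto)
    also have "\<dots> = (1 - p_w (\<epsilon> * sqrt (\<beta> / real Nu))) ^ (t div Nu)"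
      by (simp add: T_def r_def)
    finally show ?thesis .
  qed
qed

end
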